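(* Let $r,k\ge1$ be integers and let $C_1,\dots,C_r\subset\mathbb{R}^d$ be pairwise disjoint sets, each of size $k$; set $P=\bigcup_{j=1}^rC_j$. Then there exist a point $q\in\mathbb{R}^d$ and a partition $P_1,\dots,P_k$ of $P$ such that $|P_i\cap C_j|=1$ for every $i\in[k]$ and $j\in[r]$, and \[ d(q,\operatorname{conv}P_i)\le(1+\sqrt2)\frac{\operatorname{diam}P}{\sqrt r}\qquad\text{for every } i\in[k]. \]
   Context: $d(q,S)$ is the Euclidean distance from a point to a set; $\operatorname{diam}$ is the Euclidean diameter. *)

theory Defs
  imports "HOL-Analysis.Analysis"
begin

end

theory Submission
  imports Defs "HOL-Combinatorics.Permutations"
begin

lemma norm_swap_identity:
  fixes u v d :: "'a::real_inner"
  shows "(norm (u + d))^2 + (norm (v - d))^2 - (norm u)^2 - (norm v)^2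
         = 2 * (d \<bullet> (u - v)) + 2 * (norm d)^2"
  by (simp add: power2_norm_eq_inner algebra_simps inner_commute)

theorem theorem6p1:
  fixes C :: "nat \<Rightarrow> 'a::euclidean_space set" and r k :: nat
  assumes "r \<ge> 1" and "k \<ge> 1"
    and "\<And>j. j \<in> {1..r} \<Longrightarrow> finite (C j) \<and> card (C j) = k"
    and "\<And>j j'. j \<in> {1..r} \<Longrightarrow> j' \<in> {1..r} \<Longrightarrow> j \<noteq> j' \<Longrightarrow> C j \<inter> C j' = {}"
  shows "\<exists>(q::'a) (Q :: nat \<Rightarrow> 'a set).
           (\<Union>i\<in>{1..k}. Q i) = (\<Union>j\<in>{1..r}. C j)
         \<and> (\<forall>i\<in>{1..k}. \<forall>i'\<in>{1..k}. i \<noteq> i' \<longrightarrow> Q i \<inter> Q i' = {})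
         \<and> (\<forall>i\<in>{1..k}. \<forall>j\<in>{1..r}. card (Q i \<inter> C j) = 1)
         \<and> (\<forall>i\<in>{1..k}. infdist q (convex hull (Q i))
               \<le> (1 + sqrt 2) * diameter (\<Union>j\<in>{1..r}. C j) / sqrt (real r))"
proof -
  define P where "P = (\<Union>j\<in>{1..r}. C j)"
  define D where "D = diameter P"
  have finP: "finite P" using assms(3) by (auto simp: P_def)
  have distP: "\<And>x y. x \<in> P \<Longrightarrow> y \<in> P \<Longrightarrow> dist x y \<le> D"
    unfolding D_def using finP finite_imp_bounded diameter_bounded_bound by blast
  define G where "G = {g \<in> (\<Pi>\<^sub>E j\<in>{1..r}. \<Pi>\<^sub>E i\<in>{1..k}. C j). \<forall>j\<in>{1..r}. bij_betw (g j) {1..k} (C j)}"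
  define T where "T g i = (\<Sum>j\<in>{1..r}. g j i)" for g :: "nat \<Rightarrow> nat \<Rightarrow> 'a" and i
  define \<Phi> where "\<Phi> g = (\<Sum>i\<in>{1..k}. (norm (T g i))^2)" for g
  have finG: "finite G" unfolding G_def
  proof (rule finite_subset[of _ "(\<Pi>\<^sub>E j\<in>{1..r}. \<Pi>\<^sub>E i\<in>{1..k}. C j)"])
    show "finite (\<Pi>\<^sub>E j\<in>{1..r}. \<Pi>\<^sub>E i\<in>{1..k}. C j)"
      by (intro finite_PiE) (auto simp: assms(3))
  qed auto
  have "\<forall>j\<in>{1..r}. \<exists>h. bij_betw h {1..k} (C j)"
    using ex_bij_betw_nat_finite_1 assms(3) by metis
  then have "\<exists>h. \<forall>j\<in>{1..r}. bij_betw (h j) {1..k} (C j)" by (rule bchoice)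
  then obtain h where h: "\<forall>j\<in>{1..r}. bij_betw (h j) {1..k} (C j)" by blast
  define g0 where "g0 = restrict (\<lambda>j. restrict (h j) {1..k}) {1..r}"
  have "g0 \<in> G"
  proof -
    have "\<forall>j\<in>{1..r}. bij_betw (g0 j) {1..k} (C j)"
    proof
      fix j assume j: "j \<in> {1..r}"
      have "bij_betw (restrict (h j) {1..k}) {1..k} (C j)"
        using h j bij_betw_cong[of "{1..k}" "restrict (h j) {1..k}" "h j" "C j"] by simp
      thus "bij_betw (g0 j) {1..k} (C j)" using j unfolding g0_def by simp
    qed
    moreover have "g0 \<in> (\<Pi>\<^sub>E j\<in>{1..r}. \<Pi>\<^sub>E i\<in>{1..k}. C j)"
    proof -
      have "\<And>j i. j \<in> {1..r} \<Longrightarrow> i \<in> {1..k} \<Longrightarrow> h j i \<in> C j"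
        using h bij_betwE by blast
      thus ?thesis unfolding g0_def by (simp add: PiE_iff)
    qed
    ultimately show ?thesis unfolding G_def by blast
  qed
  hence Gne: "G \<noteq> {}" by blast
  obtain g where gG: "g \<in> G" and gmin: "\<And>g'. g' \<in> G \<Longrightarrow> \<Phi> g \<le> \<Phi> g'"
  proof -
    have "Min (\<Phi> ` G) \<in> \<Phi> ` G" using finG Gne by simp
    then obtain g where "g \<in> G" "\<Phi> g = Min (\<Phi> ` G)" by auto
    moreover have "\<And>g'. g' \<in> G \<Longrightarrow> Min (\<Phi> ` G) \<le> \<Phi> g'" using finG by simp
    ultimately show ?thesis using that by metis
  qed
  have gbij: "\<And>j. j\<in>{1..r} \<Longrightarrow> bij_betw (g j) {1..k} (C j)" using gG unfolding G_def by blast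
  have gC: "\<And>j i. j\<in>{1..r} \<Longrightarrow> i\<in>{1..k} \<Longrightarrow> g j i \<in> C j"
    using gbij bij_betwE by blast
  have gP: "\<And>j i. j\<in>{1..r} \<Longrightarrow> i\<in>{1..k} \<Longrightarrow> g j i \<in> P"
    using gC unfolding P_def by blast
  \<comment> \<open>local optimality under swaps\<close>
  have swap: "(g j0 i - g j0 i') \<bullet> (T g i - T g i') \<le> (norm (g j0 i - g j0 i'))^2"
    if j0: "j0 \<in> {1..r}" and ii: "i \<in> {1..k}" "i' \<in> {1..k}" "i \<noteq> i'" for j0 i i'
  proof -
    define g' where "g' = g(j0 := g j0 \<circ> Transposition.transpose i i')"
    have "g' \<in> G"
    proof -
      have "bij_betw (Transposition.transpose i i') {1..k} {1..k}"
        using permutes_swap_id[OF ii(1,2)] permutes_imp_bij by blast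
      hence b: "bij_betw (g' j0) {1..k} (C j0)"
        using gbij[OF j0] unfolding g'_def by (simp add: bij_betw_trans)
      have "g \<in> (\<Pi>\<^sub>E j\<in>{1..r}. \<Pi>\<^sub>E i\<in>{1..k}. C j)" using gG unfolding G_def by blast
      hence "g' \<in> (\<Pi>\<^sub>E j\<in>{1..r}. \<Pi>\<^sub>E i\<in>{1..k}. C j)"
        using j0 ii b unfolding g'_def
        by (auto simp: PiE_iff extensional_def bij_betw_def transpose_def)
      moreover have "\<forall>j\<in>{1..r}. bij_betw (g' j) {1..k} (C j)"
        using gbij b unfolding g'_def by auto
      ultimately show ?thesis unfolding G_def by blast
    qed
    hence le: "\<Phi> g \<le> \<Phi> g'" by (rule gmin)
    have Tg': "T g' x = T g x + (g' j0 x - g j0 x)" for x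
    proof -
      have "T g' x = (\<Sum>j\<in>{1..r}. g j x + (if j = j0 then g' j0 x - g j0 x else 0))"
        unfolding T_def g'_def by (rule sum.cong) auto
      also have "\<dots> = T g x + (g' j0 x - g j0 x)"
        using j0 unfolding T_def by (simp add: sum.distrib)
      finally show ?thesis .
    qed
    define a where "a = g j0 i"
    define b where "b = g j0 i'"
    have Ti: "T g' i = T g i + (b - a)" using Tg'[of i] ii unfolding g'_def a_def b_def by simp
    have Ti': "T g' i' = T g i' - (b - a)" using Tg'[of i'] ii unfolding g'_def a_def b_def by simp
    define hh where "hh x = (norm (T g' x))^2 - (norm (T g x))^2" for x
    have "\<Phi> g' - \<Phi> g = (\<Sum>x\<in>{1..k}. hh x)"
      unfolding \<Phi>_def hh_def by (simp add: sum_subtractf)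
    also have "\<dots> = (\<Sum>x\<in>{i,i'}. hh x)"
    proof (rule sum.mono_neutral_right)
      show "\<forall>x\<in>{1..k} - {i, i'}. hh x = 0"
        unfolding hh_def using Tg' unfolding g'_def by auto
    qed (use ii in auto)
    also have "\<dots> = hh i + hh i'" using ii by simp
    also have "\<dots> = 2 * ((b - a) \<bullet> (T g i - T g i')) + 2 * (norm (b - a))^2"
      unfolding hh_def Ti Ti' using norm_swap_identity[of "T g i" "b - a" "T g i'"] by simp
    finally have "0 \<le> 2 * ((b - a) \<bullet> (T g i - T g i')) + 2 * (norm (b - a))^2"
      using le by simp
    moreover have "(b - a) \<bullet> (T g i - T g i') = - ((a - b) \<bullet> (T g i - T g i'))"
      by (simp add: inner_diff_left)
    moreover have "norm (b - a) = norm (a - b)" by (rule norm_minus_commute)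
    ultimately show ?thesis unfolding a_def b_def by simp
  qed
  obtain x0 where "x0 \<in> P" using gP[of 1 1] assms(1,2) by auto
  hence D0: "0 \<le> D" using distP[of x0 x0] by simp
  have pair: "norm (T g i - T g i') \<le> sqrt (real r) * D"
    if ii: "i \<in> {1..k}" "i' \<in> {1..k}" for i i'
  proof (cases "i = i'")
    case True thus ?thesis using D0 by simp
  next
    case False
    have "(norm (T g i - T g i'))^2 = (T g i - T g i') \<bullet> (T g i - T g i')"
      by (simp add: power2_norm_eq_inner)
    also have "\<dots> = (\<Sum>j\<in>{1..r}. (g j i - g j i') \<bullet> (T g i - T g i'))"
    proof -
      have "T g i - T g i' = (\<Sum>j\<in>{1..r}. g j i - g j i')"
        unfolding T_def by (simp add: sum_subtractf)
      hence "(T g i - T g i') \<bullet> (T g i - T g i') = (\<Sum>j\<in>{1..r}. g j i - g j i') \<bullet> (T g i - T g i')"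
        by simp
      thus ?thesis by (simp add: inner_sum_left)
    qed
    also have "\<dots> \<le> (\<Sum>j\<in>{1..r}. (norm (g j i - g j i'))^2)"
      by (rule sum_mono) (use swap ii False in auto)
    also have "\<dots> \<le> (\<Sum>j\<in>{1..r}. D^2)"
    proof (rule sum_mono)
      fix j assume j: "j \<in> {1..r}"
      have "norm (g j i - g j i') \<le> D" using distP[OF gP[OF j ii(1)] gP[OF j ii(2)]]
        by (simp add: dist_norm)
      thus "(norm (g j i - g j i'))^2 \<le> D^2" by (simp add: power_mono)
    qed
    also have "\<dots> = (sqrt (real r) * D)^2" by (simp add: power_mult_distrib)
    finally show ?thesis using D0 by (meson power2_le_imp_le mult_nonneg_nonneg real_sqrt_ge_zero of_nat_0_le_iff)
  qed
  define c where "c i = (1 / real r) *\<^sub>R T g i" for i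
  define q where "q = (1 / real k) *\<^sub>R (\<Sum>i'\<in>{1..k}. c i')"
  define Q where "Q i = (\<lambda>j. g j i) ` {1..r}" for i
  have rpos: "real r > 0" using assms(1) by simp
  have kpos: "real k > 0" using assms(2) by simp
  have cdist: "norm (c i - c i') \<le> D / sqrt (real r)" if "i \<in> {1..k}" "i' \<in> {1..k}" for i i'
  proof -
    have "c i - c i' = (1 / real r) *\<^sub>R (T g i - T g i')" unfolding c_def by (simp add: scaleR_diff_right)
    hence "norm (c i - c i') = norm (T g i - T g i') / real r" by simp
    also have "\<dots> \<le> sqrt (real r) * D / real r" using pair[OF that] rpos by (simp add: divide_right_mono)
    also have "\<dots> = D * (sqrt (real r) / real r)" by simp
    also have "\<dots> = D / sqrt (real r)"
      using sqrt_divide_self_eq[of "real r"] by (simp add: divide_inverse)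
    finally show ?thesis .
  qed
  have cQ: "c i \<in> convex hull (Q i)" for i
  proof -
    have "(\<Sum>j\<in>{1..r}. (1 / real r) *\<^sub>R g j i) \<in> convex hull (Q i)"
      by (rule convex_sum) (use rpos in \<open>auto simp: Q_def intro: hull_inc\<close>)
    thus ?thesis unfolding c_def T_def by (simp add: scaleR_sum_right)
  qed
  have main: "infdist q (convex hull (Q i)) \<le> (1 + sqrt 2) * D / sqrt (real r)" if i: "i \<in> {1..k}" for i
  proof -
    have "c i - q = (1 / real k) *\<^sub>R (\<Sum>i'\<in>{1..k}. c i - c i')"
    proof -
      have "(\<Sum>i'\<in>{1..k}. c i - c i') = real k *\<^sub>R c i - (\<Sum>i'\<in>{1..k}. c i')"
        by (simp add: sum_subtractf sum_constant_scaleR)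
      thus ?thesis unfolding q_def using kpos by (simp add: scaleR_diff_right)
    qed
    hence "norm (c i - q) = (\<Sum>i'\<in>{1..k}. norm (c i - c i')) / real k \<or>
           norm (c i - q) \<le> (\<Sum>i'\<in>{1..k}. norm (c i - c i')) / real k"
      using norm_sum[of "\<lambda>i'. c i - c i'" "{1..k}"] kpos by (simp add: divide_right_mono)
    hence "norm (c i - q) \<le> (\<Sum>i'\<in>{1..k}. norm (c i - c i')) / real k" by auto
    also have "\<dots> \<le> (\<Sum>i'\<in>{1..k}. D / sqrt (real r)) / real k"
      using cdist[OF i] kpos by (intro divide_right_mono sum_mono) auto
    also have "\<dots> = D / sqrt (real r)" using kpos by simp
    also have "\<dots> \<le> (1 + sqrt 2) * D / sqrt (real r)"
      using D0 rpos by (intro divide_right_mono) (auto simp: algebra_simps)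
    finally have "dist q (c i) \<le> (1 + sqrt 2) * D / sqrt (real r)" by (simp add: dist_norm norm_minus_commute)
    thus ?thesis using infdist_le[OF cQ[of i], of q] by linarith
  qed
  have part1: "(\<Union>i\<in>{1..k}. Q i) = P"
  proof
    show "(\<Union>i\<in>{1..k}. Q i) \<subseteq> P" unfolding Q_def using gP by auto
    show "P \<subseteq> (\<Union>i\<in>{1..k}. Q i)"
    proof
      fix x assume "x \<in> P"
      then obtain j where j: "j \<in> {1..r}" "x \<in> C j" unfolding P_def by blast
      then obtain i where "i \<in> {1..k}" "x = g j i" using gbij[OF j(1)] unfolding bij_betw_def by blast
      thus "x \<in> (\<Union>i\<in>{1..k}. Q i)" unfolding Q_def using j by blast
    qed
  qed
  have part2: "Q i \<inter> Q i' = {}" if "i \<in> {1..k}" "i' \<in> {1..k}" "i \<noteq> i'" for i i'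
  proof (rule ccontr)
    assume "Q i \<inter> Q i' \<noteq> {}"
    then obtain j j' where jj: "j \<in> {1..r}" "j' \<in> {1..r}" "g j i = g j' i'" unfolding Q_def by blast
    have "j = j'"
    proof (rule ccontr)
      assume "j \<noteq> j'"
      hence "C j \<inter> C j' = {}" using assms(4) jj by blast
      thus False using gC[OF jj(1) that(1)] gC[OF jj(2) that(2)] jj(3) by auto
    qed
    hence "g j i = g j i'" using jj(3) by simp
    moreover have "inj_on (g j) {1..k}" using gbij[OF jj(1)] by (simp add: bij_betw_def)
    ultimately have "i = i'" using that(1,2) by (simp add: inj_onD)
    thus False using that(3) by simp
  qed
  have part3: "card (Q i \<inter> C j) = 1" if "i \<in> {1..k}" "j \<in> {1..r}" for i j
  proof -
    have "Q i \<inter> C j = {g j i}"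
    proof
      show "{g j i} \<subseteq> Q i \<inter> C j" unfolding Q_def using gC that by auto
      show "Q i \<inter> C j \<subseteq> {g j i}"
      proof
        fix x assume "x \<in> Q i \<inter> C j"
        then obtain j' where j': "j' \<in> {1..r}" "x = g j' i" "x \<in> C j" unfolding Q_def by blast
        have "j' = j"
        proof (rule ccontr)
          assume "j' \<noteq> j"
          hence "C j' \<inter> C j = {}" using assms(4) j' that by blast
          thus False using gC[OF j'(1) that(1)] j' by auto
        qed
        thus "x \<in> {g j i}" using j' by simp
      qed
    qed
    thus ?thesis by simp
  qed
  have f1: "(\<Union>i\<in>{1..k}. Q i) = (\<Union>j\<in>{1..r}. C j)" using part1 unfolding P_def .
  have f2: "\<forall>i\<in>{1..k}. \<forall>i'\<in>{1..k}. i \<noteq> i' \<longrightarrow> Q i \<inter> Q i' = {}"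
    using part2 by blast
  have f3: "\<forall>i\<in>{1..k}. \<forall>j\<in>{1..r}. card (Q i \<inter> C j) = 1" using part3 by blast
  have f4: "\<forall>i\<in>{1..k}. infdist q (convex hull (Q i))
               \<le> (1 + sqrt 2) * diameter (\<Union>j\<in>{1..r}. C j) / sqrt (real r)"
    using main unfolding D_def P_def by blast
  show ?thesis using f1 f2 f3 f4 by (intro exI[of _ q] exI[of _ Q] conjI)
qed

end
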